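(* Let $\mathcal I$ be an ideal on $\mathbb N$ which is analytic or coanalytic. Then for any series $\sum_n x_n$ in a Banach space $X$, the set $$A(\mathcal I):=\left\{t \in \{0,1\}^{\mathbb N} \colon \sum_n t(n)x_n \text{ is } \mathcal I\text{-convergent}\right\}$$ is $\lambda$-measurable and $\lambda(A(\mathcal I))$ is either $0$ or $1$. Moreover, if $\sum_n x_n$ is $\mathcal I$-divergent, then $\lambda(A(\mathcal I))=0$.
   Context: $\mathbb N=\{1,2,\dots\}$. An ideal on $\mathbb N$ is a family $\mathcal I\subset\mathcal P(\mathbb N)$ closed under finite unions and subsets, with $\mathbb N\notin\mathcal I$ and containing all finite subsets of $\mathbb N$; via characteristic functions it is regarded as a subset of the Cantor space $\{0,1\}^{\mathbb N}$, and "analytic"/"coanalytic" refer to this subset. A sequence $(y_n)$ in a normed space is $\mathcal I$-convergent to $y$ if $\{n:\|y_n-y\|>\varepsilon\}\in\mathcal I$ for every $\varepsilon>0$; a series is $\mathcal I$-convergent if its sequence of partial sums is $\mathcal I$-convergent to some element, and $\mathcal I$-divergent otherwise. $\lambda$ is the product probability measure on $\{0,1\}^{\mathbb N}$ generated by the measure giving mass $1/2$ to each of $0$ and $1$ (the Haar measure on the Cantor group). Banach spaces are over $\mathbb R$. *)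

theory Defs
  imports "HOL-Probability.Probability"
begin

text \<open>Natural numbers N = {1,2,...} of the paper are represented by Isabelle's nat = {0,1,...}
  via the relabelling n \<mapsto> n - 1; all notions below are invariant under it.\<close>

definition ideal_on :: "nat set set \<Rightarrow> bool" where
  "ideal_on \<I> \<longleftrightarrow>
     (\<forall>A\<in>\<I>. \<forall>B\<in>\<I>. A \<union> B \<in> \<I>) \<and>
     (\<forall>A\<in>\<I>. \<forall>B. B \<subseteq> A \<longrightarrow> B \<in> \<I>) \<and>
     UNIV \<notin> \<I> \<and>
     (\<forall>F. finite F \<longrightarrow> F \<in> \<I>)"

definition cantor_space :: "(nat \<Rightarrow> bool) topology" where
  "cantor_space = product_topology (\<lambda>_. discrete_topology UNIV) UNIV"

definition baire_space :: "(nat \<Rightarrow> nat) topology" where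
  "baire_space = product_topology (\<lambda>_. discrete_topology UNIV) UNIV"

definition analytic_cantor :: "(nat \<Rightarrow> bool) set \<Rightarrow> bool" where
  "analytic_cantor A \<longleftrightarrow>
     A = {} \<or> (\<exists>f. continuous_map baire_space cantor_space f \<and> f ` UNIV = A)"

definition coanalytic_cantor :: "(nat \<Rightarrow> bool) set \<Rightarrow> bool" where
  "coanalytic_cantor A \<longleftrightarrow> analytic_cantor (UNIV - A)"

definition ideal_as_cantor :: "nat set set \<Rightarrow> (nat \<Rightarrow> bool) set" where
  "ideal_as_cantor \<I> = {t. {n. t n} \<in> \<I>}"

definition I_tendsto :: "nat set set \<Rightarrow> (nat \<Rightarrow> 'a::real_normed_vector) \<Rightarrow> 'a \<Rightarrow> bool" where
  "I_tendsto \<I> y L \<longleftrightarrow> (\<forall>\<epsilon>>0. {n. norm (y n - L) > \<epsilon>} \<in> \<I>)"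

definition I_convergent_series :: "nat set set \<Rightarrow> (nat \<Rightarrow> 'a::real_normed_vector) \<Rightarrow> bool" where
  "I_convergent_series \<I> x \<longleftrightarrow> (\<exists>L. I_tendsto \<I> (\<lambda>n. \<Sum>k\<le>n. x k) L)"

definition cantor_measure :: "(nat \<Rightarrow> bool) measure" where
  "cantor_measure = PiM UNIV (\<lambda>_. measure_pmf (bernoulli_pmf (1/2)))"

definition A_set :: "nat set set \<Rightarrow> (nat \<Rightarrow> 'a::real_normed_vector) \<Rightarrow> (nat \<Rightarrow> bool) set" where
  "A_set \<I> x = {t. I_convergent_series \<I> (\<lambda>n. (if t n then 1 else 0) *\<^sub>R x n)}"

end

theory Submission
  imports Defs
begin

lemma cont_local:
  assumes "continuous_map baire_space cantor_space g"
  shows "\<exists>m. \<forall>\<tau>. (\<forall>j<m. \<tau> j = \<sigma> j) \<longrightarrow> g \<tau> i = g \<sigma> i"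
proof -
  have c: "continuous_map baire_space (discrete_topology UNIV) (\<lambda>x. g x i)"
    using assms unfolding cantor_space_def continuous_map_componentwise_UNIV by blast
  have "openin baire_space {x \<in> topspace baire_space. g x i \<in> {g \<sigma> i}}"
    by (rule openin_continuous_map_preimage[OF c]) simp
  then have op: "openin baire_space {x. g x i = g \<sigma> i}"
    by (simp add: baire_space_def)
  have op2: "\<forall>x\<in>{x. g x i = g \<sigma> i}. \<exists>U. finite {j \<in> UNIV. U j \<noteq> topspace (discrete_topology (UNIV::nat set))} \<and>
      (\<forall>j\<in>UNIV. openin (discrete_topology UNIV) (U j)) \<and> x \<in> Pi\<^sub>E UNIV U \<and> Pi\<^sub>E UNIV U \<subseteq> {x. g x i = g \<sigma> i}"
    using op unfolding baire_space_def openin_product_topology_alt .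
  have "\<sigma> \<in> {x. g x i = g \<sigma> i}" by simp
  from bspec[OF op2 this] obtain U where U: "finite {j \<in> UNIV. U j \<noteq> topspace (discrete_topology (UNIV::nat set))}"
      "\<sigma> \<in> Pi\<^sub>E UNIV U" "Pi\<^sub>E UNIV U \<subseteq> {x. g x i = g \<sigma> i}"
    by (elim exE conjE) (rule that)
  have fin: "finite {j. U j \<noteq> UNIV}" using U(1) by simp
  obtain m where m0: "{j. U j \<noteq> UNIV} \<subseteq> {..<m}" using finite_nat_bounded[OF fin] by blast
  have m: "\<And>j. U j \<noteq> UNIV \<Longrightarrow> j < m" using m0 by blast
  show ?thesis
  proof (intro exI allI impI)
    fix \<tau> :: "nat \<Rightarrow> nat" assume t: "\<forall>j<m. \<tau> j = \<sigma> j"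
    have "\<tau> \<in> Pi\<^sub>E UNIV U"
    proof (clarsimp simp: PiE_iff)
      fix j show "\<tau> j \<in> U j"
        using U(2) t m[of j] by (cases "U j = UNIV") auto
    qed
    then show "g \<tau> i = g \<sigma> i" using U(3) by blast
  qed
qed

lemma hull_exists:
  assumes "finite_measure M" "X \<subseteq> space M"
  obtains H where "H \<in> sets M" "X \<subseteq> H" "\<And>C. C \<in> sets M \<Longrightarrow> X \<subseteq> C \<Longrightarrow> measure M H \<le> measure M C"
proof -
  interpret finite_measure M by fact
  define m where "m = Inf (measure M ` {C \<in> sets M. X \<subseteq> C})"
  have ne: "measure M ` {C \<in> sets M. X \<subseteq> C} \<noteq> {}" using assms by auto
  have bdd: "bdd_below (measure M ` {C \<in> sets M. X \<subseteq> C})" by (auto intro!: bdd_belowI[of _ 0])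
  have "\<forall>k::nat. \<exists>C. C \<in> sets M \<and> X \<subseteq> C \<and> measure M C < m + inverse (real (Suc k))"
  proof
    fix k :: nat
    have "m < m + inverse (real (Suc k))" by simp
    then obtain y where "y \<in> measure M ` {C \<in> sets M. X \<subseteq> C}" "y < m + inverse (real (Suc k))"
      using cInf_lessD[OF ne] unfolding m_def by blast
    then show "\<exists>C. C \<in> sets M \<and> X \<subseteq> C \<and> measure M C < m + inverse (real (Suc k))" by auto
  qed
  then obtain C where C: "\<And>k. C k \<in> sets M" "\<And>k. X \<subseteq> C k"
      "\<And>k. measure M (C k) < m + inverse (real (Suc k))" by metis
  define H where "H = (\<Inter>k. C k)"
  have H: "H \<in> sets M" unfolding H_def using C by auto
  have XH: "X \<subseteq> H" unfolding H_def using C by auto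
  have le: "measure M H \<le> m"
  proof (rule ccontr)
    assume "\<not> measure M H \<le> m"
    then have "0 < measure M H - m" by simp
    then obtain k where k: "inverse (real (Suc k)) < measure M H - m"
      using reals_Archimedean by blast
    have "measure M H \<le> measure M (C k)"
      using C H by (intro finite_measure_mono) (auto simp: H_def)
    with C(3)[of k] k show False by simp
  qed
  show ?thesis
  proof (rule that[OF H XH])
    fix D assume "D \<in> sets M" "X \<subseteq> D"
    then have "m \<le> measure M D" unfolding m_def by (intro cInf_lower bdd) auto
    with le show "measure M H \<le> measure M D" by simp
  qed
qed

lemma suslin_completion:
  fixes M :: "'a measure" and F :: "nat list \<Rightarrow> 'a set"
  assumes fm: "finite_measure M" and F: "\<And>s. F s \<in> sets M"
  shows "{t. \<exists>\<sigma>::nat\<Rightarrow>nat. \<forall>n. t \<in> F (map \<sigma> [0..<n])} \<in> sets (completion M)"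
proof -
  interpret finite_measure M by fact
  define A where "A s = {t. \<exists>\<sigma>::nat\<Rightarrow>nat. map \<sigma> [0..<length s] = s \<and> (\<forall>n. t \<in> F (map \<sigma> [0..<n]))}" for s
  have AF: "A s \<subseteq> F s" for s
  proof
    fix t assume "t \<in> A s"
    then obtain \<sigma> where "map \<sigma> [0..<length s] = s" "\<forall>n. t \<in> F (map \<sigma> [0..<n])"
      unfolding A_def by blast
    then show "t \<in> F s" by metis
  qed
  have Asp: "A s \<subseteq> space M" for s using AF[of s] sets.sets_into_space[OF F[of s]] by blast
  have "\<forall>s. \<exists>H. H \<in> sets M \<and> A s \<subseteq> H \<and> (\<forall>C. C \<in> sets M \<longrightarrow> A s \<subseteq> C \<longrightarrow> measure M H \<le> measure M C)"
  proof
    fix s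
    obtain H where "H \<in> sets M" "A s \<subseteq> H" "\<And>C. C \<in> sets M \<Longrightarrow> A s \<subseteq> C \<Longrightarrow> measure M H \<le> measure M C"
      using hull_exists[OF fm Asp[of s]] by blast
    then show "\<exists>H. H \<in> sets M \<and> A s \<subseteq> H \<and> (\<forall>C. C \<in> sets M \<longrightarrow> A s \<subseteq> C \<longrightarrow> measure M H \<le> measure M C)"
      by blast
  qed
  then obtain H where H: "\<And>s. H s \<in> sets M" "\<And>s. A s \<subseteq> H s"
     "\<And>s C. C \<in> sets M \<Longrightarrow> A s \<subseteq> C \<Longrightarrow> measure M (H s) \<le> measure M C" by metis
  define B where "B s = H s \<inter> F s" for s
  have B_sets: "B s \<in> sets M" for s using H F by (auto simp: B_def)
  have AB: "A s \<subseteq> B s" for s using H AF by (auto simp: B_def)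
  have BF: "B s \<subseteq> F s" for s by (auto simp: B_def)
  have Bmin: "measure M (B s) \<le> measure M C" if "C \<in> sets M" "A s \<subseteq> C" for s C
  proof -
    have "measure M (B s) \<le> measure M (H s)"
      using H F by (intro finite_measure_mono) (auto simp: B_def)
    also have "\<dots> \<le> measure M C" using H(3) that by blast
    finally show ?thesis .
  qed
  have Asplit: "A s \<subseteq> (\<Union>k. A (s @ [k]))" for s
  proof
    fix t assume "t \<in> A s"
    then obtain \<sigma> where s: "map \<sigma> [0..<length s] = s" and t: "\<forall>n. t \<in> F (map \<sigma> [0..<n])"
      unfolding A_def by blast
    have "map \<sigma> [0..<length (s @ [\<sigma> (length s)])] = s @ [\<sigma> (length s)]"
      using s by simp
    then show "t \<in> (\<Union>k. A (s @ [k]))" using t unfolding A_def by blast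
  qed
  define D where "D s = B s - (\<Union>k. B (s @ [k]))" for s
  have D_null: "D s \<in> null_sets M" for s
  proof -
    define C where "C = B s \<inter> (\<Union>k. B (s @ [k]))"
    have C: "C \<in> sets M" using B_sets by (auto simp: C_def)
    have "A s \<subseteq> C"
    proof
      fix t assume t: "t \<in> A s"
      then have t1: "t \<in> B s" using AB[of s] by blast
      from t Asplit[of s] obtain k where "t \<in> A (s @ [k])" by blast
      then have "t \<in> B (s @ [k])" using AB[of "s @ [k]"] by blast
      then show "t \<in> C" using t1 unfolding C_def by blast
    qed
    then have "measure M (B s) \<le> measure M C" by (rule Bmin[OF C])
    moreover have "measure M C \<le> measure M (B s)"
      using C B_sets by (intro finite_measure_mono) (auto simp: C_def)
    moreover have "D s = B s - C" by (auto simp: D_def C_def)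
    moreover have "measure M (B s - C) = measure M (B s) - measure M C"
      using C B_sets by (intro finite_measure_Diff) (auto simp: C_def)
    ultimately have "measure M (D s) = 0" by simp
    moreover have "D s \<in> sets M" using C B_sets \<open>D s = B s - C\<close> by auto
    ultimately show ?thesis by (simp add: emeasure_eq_measure null_setsI)
  qed
  define N where "N = (\<Union>s. D s)"
  have N: "N \<in> null_sets M" unfolding N_def by (rule null_sets_UN[OF D_null])
  have eqA: "{t. \<exists>\<sigma>::nat\<Rightarrow>nat. \<forall>n. t \<in> F (map \<sigma> [0..<n])} = A []" by (simp add: A_def)
  have sub: "B [] - N \<subseteq> A []"
  proof
    fix t assume t: "t \<in> B [] - N"
    then have step: "\<exists>k. t \<in> B (s @ [k])" if "t \<in> B s" for s
      using that by (auto simp: N_def D_def)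
    define l where "l = rec_nat [] (\<lambda>n ls. ls @ [SOME k. t \<in> B (ls @ [k])])"
    have l0: "l 0 = []" and lS: "l (Suc n) = l n @ [SOME k. t \<in> B (l n @ [k])]" for n
      by (simp_all add: l_def)
    have lB: "t \<in> B (l n)" for n
    proof (induction n)
      case 0 then show ?case using t l0 by simp
    next
      case (Suc n) then show ?case using someI_ex[OF step[OF Suc]] lS by simp
    qed
    have ll: "length (l n) = n" for n by (induction n) (simp_all add: l0 lS)
    define \<sigma> where "\<sigma> n = l (Suc n) ! n" for n
    have lm: "map \<sigma> [0..<n] = l n" for n
    proof (induction n)
      case 0 then show ?case by (simp add: l0)
    next
      case (Suc n)
      have "\<sigma> n = (SOME k. t \<in> B (l n @ [k]))" unfolding \<sigma>_def lS using ll[of n] by (simp add: nth_append)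
      then show ?case using Suc by (simp add: lS)
    qed
    have "\<forall>n. t \<in> F (map \<sigma> [0..<n])"
    proof
      fix n show "t \<in> F (map \<sigma> [0..<n])" using lB[of n] BF[of "l n"] lm[of n] by auto
    qed
    then show "t \<in> A []" unfolding A_def by auto
  qed
  have "A [] = (B [] - N) \<union> (A [] \<inter> N)" using sub AB[of "[]"] by blast
  then have "A [] \<in> sets (completion M)"
    by (rule sets_completionI[OF _ _ N]) (use B_sets N in auto)
  then show ?thesis using eqA by simp
qed


lemma space_cantor[simp]: "space cantor_measure = UNIV"
  by (simp add: cantor_measure_def space_PiM)

lemma UNIV_cantor[simp]: "UNIV \<in> sets cantor_measure"
  by (metis sets.top space_cantor)

lemma prob_cantor: "prob_space cantor_measure"
  unfolding cantor_measure_def by (intro prob_space_PiM prob_space_measure_pmf)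

lemma coord_sets: "{t. t k} \<in> sets cantor_measure"
proof -
  have "{t \<in> space cantor_measure. t k} \<in> sets cantor_measure"
    unfolding cantor_measure_def by (rule sets_Collect_single') auto
  then show ?thesis by simp
qed

lemma finite_dep:
  "(\<And>t t'. (\<forall>k<K. t k = t' k) \<Longrightarrow> P t = P t') \<Longrightarrow> {t. P t} \<in> sets cantor_measure"
proof (induction K arbitrary: P)
  case 0
  then have "\<And>t. P t = P (\<lambda>_. False)" by blast
  then show ?case by (cases "P (\<lambda>_. False)") auto
next
  case (Suc K)
  have h: "{t. P (t(K:=b))} \<in> sets cantor_measure" for b
  proof (rule Suc.IH)
    fix t t' :: "nat \<Rightarrow> bool" assume "\<forall>k<K. t k = t' k"
    then have "\<forall>k<Suc K. (t(K:=b)) k = (t'(K:=b)) k" by auto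
    then show "P (t(K:=b)) = P (t'(K:=b))" using Suc.prems by blast
  qed
  have eq: "{t. P t} = ({t. t K} \<inter> {t. P (t(K:=True))}) \<union> ((UNIV - {t. t K}) \<inter> {t. P (t(K:=False))})"
  proof (intro set_eqI iffI)
    fix t assume "t \<in> {t. P t}"
    then show "t \<in> ({t. t K} \<inter> {t. P (t(K:=True))}) \<union> ((UNIV - {t. t K}) \<inter> {t. P (t(K:=False))})"
      by (cases "t K") (auto simp: fun_upd_idem)
  next
    fix t assume "t \<in> ({t. t K} \<inter> {t. P (t(K:=True))}) \<union> ((UNIV - {t. t K}) \<inter> {t. P (t(K:=False))})"
    then show "t \<in> {t. P t}"
      by (cases "t K") (auto simp: fun_upd_idem)
  qed
  have c: "UNIV - {t. t K} \<in> sets cantor_measure"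
    using coord_sets[of K] by (metis sets.compl_sets space_cantor)
  show ?case unfolding eq using h coord_sets c by (intro sets.Un sets.Int) auto
qed

lemma analytic_core:
  fixes g :: "(nat \<Rightarrow> nat) \<Rightarrow> nat \<Rightarrow> bool" and E :: "(nat \<Rightarrow> bool) \<Rightarrow> nat \<Rightarrow> bool"
  assumes cont: "\<And>\<sigma> i. \<exists>m. \<forall>\<tau>. (\<forall>j<m. \<tau> j = \<sigma> j) \<longrightarrow> g \<tau> i = g \<sigma> i"
    and meas: "\<And>i. {t. E t i} \<in> sets cantor_measure"
  shows "{t. \<exists>\<sigma>. g \<sigma> = E t} \<in> sets (completion cantor_measure)"
proof -
  interpret P: prob_space cantor_measure by (rule prob_cantor)
  define ext where "ext s = (\<lambda>j. if j < length s then s ! j else (0::nat))" for s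
  define dec where "dec s i \<longleftrightarrow> (\<forall>\<tau>. map \<tau> [0..<length s] = s \<longrightarrow> g \<tau> i = g (ext s) i)" for s i
  define F where "F s = (\<Inter>i. if dec s i then {t. E t i = g (ext s) i} else UNIV)" for s
  have Eb: "{t. E t i = b} \<in> sets cantor_measure" for i b
  proof (cases b)
    case True then show ?thesis using meas[of i] by simp
  next
    case False
    have "{t. E t i = b} = UNIV - {t. E t i}" using False by auto
    then show ?thesis using meas[of i] by (metis sets.compl_sets space_cantor)
  qed
  have F: "F s \<in> sets cantor_measure" for s
    unfolding F_def using Eb by (intro sets.countable_INT) auto
  have eq: "{t. \<exists>\<sigma>. g \<sigma> = E t} = {t. \<exists>\<sigma>::nat\<Rightarrow>nat. \<forall>n. t \<in> F (map \<sigma> [0..<n])}"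
  proof (intro set_eqI iffI)
    fix t assume "t \<in> {t. \<exists>\<sigma>. g \<sigma> = E t}"
    then obtain \<sigma> where s: "g \<sigma> = E t" by blast
    have "t \<in> F (map \<sigma> [0..<n])" for n
      unfolding F_def dec_def using s by auto
    then show "t \<in> {t. \<exists>\<sigma>::nat\<Rightarrow>nat. \<forall>n. t \<in> F (map \<sigma> [0..<n])}" by blast
  next
    fix t assume "t \<in> {t. \<exists>\<sigma>::nat\<Rightarrow>nat. \<forall>n. t \<in> F (map \<sigma> [0..<n])}"
    then obtain \<sigma> :: "nat \<Rightarrow> nat" where s: "\<And>n. t \<in> F (map \<sigma> [0..<n])" by blast
    have "g \<sigma> i = E t i" for i
    proof -
      obtain m where m: "\<And>\<tau>. (\<forall>j<m. \<tau> j = \<sigma> j) \<Longrightarrow> g \<tau> i = g \<sigma> i" using cont by blast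
      define s where "s = map \<sigma> [0..<m]"
      have es: "\<forall>j<m. ext s j = \<sigma> j" by (simp add: ext_def s_def)
      have "dec s i"
        unfolding dec_def
      proof (intro allI impI)
        fix \<tau> :: "nat \<Rightarrow> nat" assume "map \<tau> [0..<length s] = s"
        then have "\<forall>j<m. \<tau> j = \<sigma> j" by (simp add: s_def map_eq_conv)
        then show "g \<tau> i = g (ext s) i" using m es by metis
      qed
      moreover have "t \<in> F s" using s s_def by simp
      ultimately have "E t i = g (ext s) i" unfolding F_def by auto
      then show ?thesis using m es by metis
    qed
    then show "t \<in> {t. \<exists>\<sigma>. g \<sigma> = E t}" by auto
  qed
  show ?thesis unfolding eq by (rule suslin_completion[OF P.finite_measure_axioms F])
qed


lemma ideal_sub: "ideal_on I \<Longrightarrow> A \<in> I \<Longrightarrow> B \<subseteq> A \<Longrightarrow> B \<in> I"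
  unfolding ideal_on_def by blast
lemma ideal_Un: "ideal_on I \<Longrightarrow> A \<in> I \<Longrightarrow> B \<in> I \<Longrightarrow> A \<union> B \<in> I"
  unfolding ideal_on_def by blast
lemma ideal_fin: "ideal_on I \<Longrightarrow> finite A \<Longrightarrow> A \<in> I"
  unfolding ideal_on_def by blast
lemma ideal_ne: "ideal_on I \<Longrightarrow> A \<in> I \<Longrightarrow> \<exists>n. n \<notin> A"
  unfolding ideal_on_def by blast

lemma I_tendsto_shift:
  fixes y y' :: "nat \<Rightarrow> 'a::real_normed_vector"
  assumes I: "ideal_on I" and t: "I_tendsto I y L" and e: "\<And>n. n \<ge> N \<Longrightarrow> y' n = y n + c"
  shows "I_tendsto I y' (L + c)"
  unfolding I_tendsto_def
proof (intro allI impI)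
  fix \<epsilon> :: real assume "\<epsilon> > 0"
  have sub: "{n. \<epsilon> < norm (y' n - (L + c))} \<subseteq> {n. \<epsilon> < norm (y n - L)} \<union> {..<N}"
  proof
    fix n assume "n \<in> {n. \<epsilon> < norm (y' n - (L + c))}"
    then show "n \<in> {n. \<epsilon> < norm (y n - L)} \<union> {..<N}"
      using e[of n] by (cases "n \<ge> N") (auto simp: algebra_simps)
  qed
  have "{n. \<epsilon> < norm (y n - L)} \<in> I" using t \<open>\<epsilon> > 0\<close> by (simp add: I_tendsto_def)
  moreover have "{..<N} \<in> I" using I by (intro ideal_fin) auto
  ultimately have "{n. \<epsilon> < norm (y n - L)} \<union> {..<N} \<in> I" using I ideal_Un by blast
  with sub show "{n. \<epsilon> < norm (y' n - (L + c))} \<in> I" using I ideal_sub by blast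
qed

lemma I_tendsto_add:
  fixes a b :: "nat \<Rightarrow> 'a::real_normed_vector"
  assumes I: "ideal_on I" and ta: "I_tendsto I a L1" and tb: "I_tendsto I b L2"
  shows "I_tendsto I (\<lambda>n. a n + b n) (L1 + L2)"
  unfolding I_tendsto_def
proof (intro allI impI)
  fix \<epsilon> :: real assume ep: "\<epsilon> > 0"
  have "{n. \<epsilon> < norm (a n + b n - (L1 + L2))} \<subseteq> {n. \<epsilon>/2 < norm (a n - L1)} \<union> {n. \<epsilon>/2 < norm (b n - L2)}"
  proof
    fix n assume n: "n \<in> {n. \<epsilon> < norm (a n + b n - (L1 + L2))}"
    have "norm (a n + b n - (L1 + L2)) \<le> norm (a n - L1) + norm (b n - L2)"
      using norm_triangle_ineq[of "a n - L1" "b n - L2"] by (simp add: algebra_simps)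
    then show "n \<in> {n. \<epsilon>/2 < norm (a n - L1)} \<union> {n. \<epsilon>/2 < norm (b n - L2)}" using n by auto
  qed
  moreover have "\<epsilon>/2 > 0" using ep by simp
  then have "{n. \<epsilon>/2 < norm (a n - L1)} \<in> I" "{n. \<epsilon>/2 < norm (b n - L2)} \<in> I"
    using ta tb unfolding I_tendsto_def by blast+
  then have "{n. \<epsilon>/2 < norm (a n - L1)} \<union> {n. \<epsilon>/2 < norm (b n - L2)} \<in> I"
    using I ideal_Un by blast
  ultimately show "{n. \<epsilon> < norm (a n + b n - (L1 + L2))} \<in> I" using I ideal_sub by blast
qed

lemma I_cauchy:
  fixes y :: "nat \<Rightarrow> 'a::banach"
  assumes I: "ideal_on I"
  shows "(\<exists>L. I_tendsto I y L) \<longleftrightarrow> (\<forall>m. \<exists>N. {n. inverse (real (Suc m)) < norm (y n - y N)} \<in> I)"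
proof
  assume "\<exists>L. I_tendsto I y L"
  then obtain L where L: "I_tendsto I y L" by blast
  show "\<forall>m. \<exists>N. {n. inverse (real (Suc m)) < norm (y n - y N)} \<in> I"
  proof
    fix m
    define e where "e = inverse (real (Suc m))"
    have e: "e > 0" by (simp add: e_def)
    have "e/2 > 0" using e by simp
    then have S: "{n. e/2 < norm (y n - L)} \<in> I" using L unfolding I_tendsto_def by blast
    then obtain N where N: "N \<notin> {n. e/2 < norm (y n - L)}" using ideal_ne[OF I] by blast
    have "{n. e < norm (y n - y N)} \<subseteq> {n. e/2 < norm (y n - L)}"
    proof
      fix n assume n: "n \<in> {n. e < norm (y n - y N)}"
      have "norm (y n - y N) \<le> norm (y n - L) + norm (y N - L)"
        using norm_triangle_ineq4[of "y n - L" "y N - L"] by simp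
      then show "n \<in> {n. e/2 < norm (y n - L)}" using n N by auto
    qed
    then have "{n. e < norm (y n - y N)} \<in> I" using S I ideal_sub by blast
    then show "\<exists>N. {n. inverse (real (Suc m)) < norm (y n - y N)} \<in> I" unfolding e_def by blast
  qed
next
  assume "\<forall>m. \<exists>N. {n. inverse (real (Suc m)) < norm (y n - y N)} \<in> I"
  then obtain N where N: "\<And>m. {n. inverse (real (Suc m)) < norm (y n - y (N m))} \<in> I" by metis
  define iv where "iv m = inverse (real (Suc m))" for m
  have ivpos: "iv m > 0" for m by (simp add: iv_def)
  have ivmono: "m \<le> k \<Longrightarrow> iv k \<le> iv m" for m k by (simp add: iv_def field_simps)
  have close: "norm (y (N j) - y (N k)) \<le> iv j + iv k" for j k
  proof -
    have "{n. iv j < norm (y n - y (N j))} \<union> {n. iv k < norm (y n - y (N k))} \<in> I"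
      using N I by (intro ideal_Un) (auto simp: iv_def)
    then obtain n where n: "n \<notin> {n. iv j < norm (y n - y (N j))} \<union> {n. iv k < norm (y n - y (N k))}"
      using ideal_ne[OF I] by blast
    have "norm (y (N j) - y (N k)) \<le> norm (y n - y (N j)) + norm (y n - y (N k))"
      using norm_triangle_ineq4[of "y n - y (N k)" "y n - y (N j)"] by (simp add: norm_minus_commute add.commute)
    then show ?thesis using n by auto
  qed
  have "Cauchy (\<lambda>m. y (N m))"
  proof (rule metric_CauchyI)
    fix e :: real assume "e > 0"
    then obtain M where M: "iv M < e/2" using reals_Archimedean[of "e/2"] by (auto simp: iv_def)
    show "\<exists>M. \<forall>m\<ge>M. \<forall>n\<ge>M. dist (y (N m)) (y (N n)) < e"
    proof (intro exI allI impI)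
      fix m n assume "M \<le> m" "M \<le> n"
      then have "iv m + iv n \<le> iv M + iv M" using ivmono[of M m] ivmono[of M n] by linarith
      then show "dist (y (N m)) (y (N n)) < e" using close[of m n] M by (simp add: dist_norm)
    qed
  qed
  then obtain L where L: "(\<lambda>m. y (N m)) \<longlonglongrightarrow> L" using Cauchy_convergent_iff convergent_def by blast
  have bnd: "norm (y (N j) - L) \<le> iv j" for j
  proof -
    have l1: "(\<lambda>k. norm (y (N j) - y (N k))) \<longlonglongrightarrow> norm (y (N j) - L)"
      by (intro tendsto_intros L)
    have l2: "(\<lambda>k. iv j + iv k) \<longlonglongrightarrow> iv j + 0"
      unfolding iv_def by (intro tendsto_intros LIMSEQ_inverse_real_of_nat)
    show ?thesis using tendsto_le[OF trivial_limit_sequentially l2 l1] close by simp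
  qed
  have "I_tendsto I y L"
    unfolding I_tendsto_def
  proof (intro allI impI)
    fix \<epsilon> :: real assume "\<epsilon> > 0"
    then obtain j where j: "iv j < \<epsilon>/2" using reals_Archimedean[of "\<epsilon>/2"] by (auto simp: iv_def)
    have "{n. \<epsilon> < norm (y n - L)} \<subseteq> {n. iv j < norm (y n - y (N j))}"
    proof
      fix n assume n: "n \<in> {n. \<epsilon> < norm (y n - L)}"
      have "norm (y n - L) \<le> norm (y n - y (N j)) + norm (y (N j) - L)"
        using norm_triangle_ineq[of "y n - y (N j)" "y (N j) - L"] by simp
      then show "n \<in> {n. iv j < norm (y n - y (N j))}" using n bnd[of j] j by auto
    qed
    then show "{n. \<epsilon> < norm (y n - L)} \<in> I" using N[of j] I ideal_sub by (auto simp: iv_def)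
  qed
  then show "\<exists>L. I_tendsto I y L" by blast
qed

definition flip :: "nat set \<Rightarrow> (nat \<Rightarrow> bool) \<Rightarrow> nat \<Rightarrow> bool" where
  "flip F t = (\<lambda>i. if i \<in> F then \<not> t i else t i)"

lemma flip_flip[simp]: "flip F (flip F t) = t"
  by (auto simp: flip_def)

lemma A_flip1:
  assumes I: "ideal_on I" and F: "finite F" and t: "t \<in> A_set I x"
  shows "flip F t \<in> A_set I x"
proof -
  define a where "a t k = (if t k then 1 else 0) *\<^sub>R x k" for t k
  from F obtain N where N: "F \<subseteq> {..<N}" using finite_nat_bounded by blast
  define d where "d k = a (flip F t) k - a t k" for k
  define c where "c = (\<Sum>k<N. d k)"
  from t obtain L where L: "I_tendsto I (\<lambda>n. \<Sum>k\<le>n. a t k) L"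
    by (auto simp: A_set_def I_convergent_series_def a_def)
  have "I_tendsto I (\<lambda>n. \<Sum>k\<le>n. a (flip F t) k) (L + c)"
  proof (rule I_tendsto_shift[OF I L])
    fix n assume n: "N \<le> n"
    have "(\<Sum>k\<le>n. d k) = (\<Sum>k<N. d k)"
    proof (rule sum.mono_neutral_right)
      show "\<forall>i\<in>{..n} - {..<N}. d i = 0" using N by (auto simp: d_def a_def flip_def)
    qed (use n in auto)
    then have "(\<Sum>k\<le>n. a (flip F t) k) - (\<Sum>k\<le>n. a t k) = c"
      by (simp add: c_def d_def sum_subtractf)
    then show "(\<Sum>k\<le>n. a (flip F t) k) = (\<Sum>k\<le>n. a t k) + c"
      by (metis add.commute diff_add_cancel)
  qed
  then show ?thesis by (auto simp: A_set_def I_convergent_series_def a_def)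
qed

lemma A_flip:
  assumes "ideal_on I" "finite F"
  shows "flip F t \<in> A_set I x \<longleftrightarrow> t \<in> A_set I x"
  using A_flip1[OF assms, of t x] A_flip1[OF assms, of "flip F t" x] by auto

lemma A_compl:
  assumes I: "ideal_on I" and t: "t \<in> A_set I x" and t': "flip UNIV t \<in> A_set I x"
  shows "I_convergent_series I x"
proof -
  from t obtain L1 where L1: "I_tendsto I (\<lambda>n. \<Sum>k\<le>n. (if t k then 1 else 0) *\<^sub>R x k) L1"
    by (auto simp: A_set_def I_convergent_series_def)
  from t' obtain L2 where L2: "I_tendsto I (\<lambda>n. \<Sum>k\<le>n. (if \<not> t k then 1 else 0) *\<^sub>R x k) L2"
    by (auto simp: A_set_def I_convergent_series_def flip_def)
  have "I_tendsto I (\<lambda>n. (\<Sum>k\<le>n. (if t k then 1 else 0) *\<^sub>R x k) + (\<Sum>k\<le>n. (if \<not> t k then 1 else 0) *\<^sub>R x k)) (L1 + L2)"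
    by (rule I_tendsto_add[OF I L1 L2])
  moreover have "(\<lambda>n. (\<Sum>k\<le>n. (if t k then 1 else 0) *\<^sub>R x k) + (\<Sum>k\<le>n. (if \<not> t k then 1 else 0) *\<^sub>R x k)) = (\<lambda>n. \<Sum>k\<le>n. x k)"
    by (auto simp: sum.distrib[symmetric] intro!: sum.cong)
  ultimately show ?thesis unfolding I_convergent_series_def by auto
qed


abbreviation "Bm \<equiv> measure_pmf (bernoulli_pmf (1/2))"

lemma cantor_eq: "cantor_measure = PiM UNIV (\<lambda>_. Bm)"
  by (simp add: cantor_measure_def)

lemma Bm_Not: "emeasure Bm (Not -` S) = emeasure Bm S"
proof -
  have "card (Not -` S) = card S"
    by (rule card_vimage_inj) (auto simp: inj_def image_def intro: exI[of _ "\<not> x" for x])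
  then show ?thesis unfolding measure_pmf_bernoulli_half
    by (simp add: emeasure_uniform_count_measure)
qed

lemma flip_meas: "flip G \<in> cantor_measure \<rightarrow>\<^sub>M cantor_measure"
  unfolding cantor_eq
proof (rule measurable_PiM_single)
  show "flip G \<in> space (Pi\<^sub>M UNIV (\<lambda>_. Bm)) \<rightarrow> (\<Pi>\<^sub>E i\<in>UNIV. space Bm)"
    by (simp add: space_PiM)
  fix A i assume "i \<in> (UNIV::nat set)" "A \<in> sets Bm"
  show "{\<omega> \<in> space (Pi\<^sub>M UNIV (\<lambda>_. Bm)). flip G \<omega> i \<in> A} \<in> sets (Pi\<^sub>M UNIV (\<lambda>_. Bm))"
    unfolding flip_def by (rule sets_Collect_single') auto
qed

lemma flip_pres: "distr cantor_measure cantor_measure (flip G) = cantor_measure"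
proof -
  have pr: "prob_space (PiM UNIV (\<lambda>_::nat. Bm))" by (intro prob_space_PiM prob_space_measure_pmf)
  have "PiM UNIV (\<lambda>_::nat. Bm) = distr (PiM UNIV (\<lambda>_. Bm)) (PiM UNIV (\<lambda>_. Bm)) (flip G)"
  proof (rule measure_eqI_PiM_infinite[OF refl])
    show "sets (distr (PiM UNIV (\<lambda>_::nat. Bm)) (PiM UNIV (\<lambda>_. Bm)) (flip G)) = sets (PiM UNIV (\<lambda>_. Bm))"
      by simp
    show "finite_measure (PiM UNIV (\<lambda>_::nat. Bm))" using pr by (simp add: prob_space_def)
    fix A :: "nat \<Rightarrow> bool set" and J :: "nat set" assume J: "finite J" "J \<subseteq> UNIV"
    define A' where "A' j = (if j \<in> G then Not -` A j else A j)" for j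
    have pre: "flip G -` prod_emb UNIV (\<lambda>_. Bm) J (Pi\<^sub>E J A) \<inter> space (PiM UNIV (\<lambda>_. Bm))
       = prod_emb UNIV (\<lambda>_. Bm) J (Pi\<^sub>E J A')"
      by (auto simp: prod_emb_def flip_def PiE_iff space_PiM A'_def) (drule (1) bspec, simp)+
    have "emeasure (distr (PiM UNIV (\<lambda>_. Bm)) (PiM UNIV (\<lambda>_. Bm)) (flip G)) (prod_emb UNIV (\<lambda>_. Bm) J (Pi\<^sub>E J A))
        = emeasure (PiM UNIV (\<lambda>_. Bm)) (prod_emb UNIV (\<lambda>_. Bm) J (Pi\<^sub>E J A'))"
      using J flip_meas unfolding pre[symmetric] cantor_eq
      by (intro emeasure_distr) (auto intro!: sets_PiM_I)
    also have "\<dots> = (\<Prod>j\<in>J. emeasure Bm (A' j))"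
      using J by (intro emeasure_PiM_emb prob_space_measure_pmf) auto
    also have "\<dots> = (\<Prod>j\<in>J. emeasure Bm (A j))"
      by (intro prod.cong refl) (simp add: A'_def Bm_Not)
    also have "\<dots> = emeasure (PiM UNIV (\<lambda>_. Bm)) (prod_emb UNIV (\<lambda>_. Bm) J (Pi\<^sub>E J A))"
      using J by (intro emeasure_PiM_emb[symmetric] prob_space_measure_pmf) auto
    finally show "emeasure (PiM UNIV (\<lambda>_. Bm)) (prod_emb UNIV (\<lambda>_. Bm) J (Pi\<^sub>E J A)) =
        emeasure (distr (PiM UNIV (\<lambda>_. Bm)) (PiM UNIV (\<lambda>_. Bm)) (flip G)) (prod_emb UNIV (\<lambda>_. Bm) J (Pi\<^sub>E J A))"
      by simp
  qed
  then show ?thesis unfolding cantor_eq by simp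
qed

lemma flip_sets: "S \<in> sets cantor_measure \<Longrightarrow> flip G -` S \<in> sets cantor_measure"
  using measurable_sets[OF flip_meas, of S G] by simp

lemma flip_emeasure: "S \<in> sets cantor_measure \<Longrightarrow> emeasure cantor_measure (flip G -` S) = emeasure cantor_measure S"
proof -
  assume S: "S \<in> sets cantor_measure"
  have "emeasure cantor_measure S = emeasure (distr cantor_measure cantor_measure (flip G)) S"
    by (simp add: flip_pres)
  also have "\<dots> = emeasure cantor_measure (flip G -` S)"
    using S flip_meas by (simp add: emeasure_distr)
  finally show ?thesis by simp
qed

lemma flip_null: "N \<in> null_sets cantor_measure \<Longrightarrow> flip G -` N \<in> null_sets cantor_measure"
  using flip_emeasure[of N G] flip_sets[of N G] by (auto simp: null_sets_def)

lemma flip_measure: "S \<in> sets cantor_measure \<Longrightarrow> measure cantor_measure (flip G -` S) = measure cantor_measure S"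
  using flip_emeasure by (simp add: measure_def)

lemma compl_measure:
  assumes "A = S \<union> N" "N \<subseteq> N'" "N' \<in> null_sets M" "S \<in> sets M"
  shows "measure (completion M) A = measure M S"
proof -
  have "N' \<in> null_sets (completion M)"
    using assms(3) by (auto simp: null_sets_def)
  then have "N \<in> null_sets (completion M)"
    using assms(2) null_sets_completion[OF assms(3,2)]
    by (meson null_sets_subset null_sets_completion)
  then have "measure (completion M) (S \<union> N) = measure (completion M) S"
    using assms(4) by (intro measure_Un_null_set) auto
  then show ?thesis using assms(1,4) by simp
qed


lemma zero_one:
  assumes A: "A \<in> sets (completion cantor_measure)"
    and inv: "\<And>G t. finite G \<Longrightarrow> flip G t \<in> A \<longleftrightarrow> t \<in> A"
  shows "measure (completion cantor_measure) A = 0 \<or> measure (completion cantor_measure) A = 1"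
proof -
  interpret P: prob_space cantor_measure by (rule prob_cantor)
  obtain S N N' where SN: "A = S \<union> N" "N \<subseteq> N'" "N' \<in> null_sets cantor_measure" "S \<in> sets cantor_measure"
    using sets_completionE[OF A] by metis
  define Fin where "Fin = {G::nat set. finite G}"
  have cFin: "countable Fin" unfolding Fin_def by (rule countable_Collect_finite)
  have neFin: "{} \<in> Fin" by (simp add: Fin_def)
  define B where "B = (\<Inter>G\<in>Fin. flip G -` S)"
  have Bs: "B \<in> sets cantor_measure" unfolding B_def
    using SN(4) cFin neFin by (intro sets.countable_INT') (auto intro: flip_sets)
  define N2 where "N2 = (\<Union>G\<in>Fin. flip G -` N')"
  have N2: "N2 \<in> null_sets cantor_measure" unfolding N2_def
    using cFin SN(3) by (intro null_sets_UN' flip_null) auto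
  have flip0: "flip {} t = t" for t by (simp add: flip_def)
  have BS: "B \<subseteq> S"
  proof
    fix t assume "t \<in> B"
    then have "flip {} t \<in> S" using neFin unfolding B_def by blast
    then show "t \<in> S" by (simp add: flip0)
  qed
  have AB: "A \<subseteq> B \<union> N2"
  proof
    fix t assume t: "t \<in> A"
    show "t \<in> B \<union> N2"
    proof (cases "t \<in> B")
      case False
      then obtain G where G: "G \<in> Fin" "flip G t \<notin> S" unfolding B_def by auto
      have "flip G t \<in> A" using inv[of G t] t G(1) by (simp add: Fin_def)
      then have "flip G t \<in> N'" using G(2) SN(1,2) by auto
      then show ?thesis using G(1) unfolding N2_def by auto
    qed simp
  qed
  have mA: "measure (completion cantor_measure) A = measure cantor_measure B"
  proof (rule compl_measure[of A B "A - B" N2])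
    show "A = B \<union> (A - B)" using BS SN(1) by auto
    show "A - B \<subseteq> N2" using AB by auto
  qed (use N2 Bs in auto)
  have Binv: "flip H t \<in> B \<longleftrightarrow> t \<in> B" if H: "finite H" for H t
  proof
    assume "flip H t \<in> B"
    then have h: "\<And>G. finite G \<Longrightarrow> flip G (flip H t) \<in> S" unfolding B_def Fin_def by auto
    show "t \<in> B" unfolding B_def Fin_def
    proof clarsimp
      fix G :: "nat set" assume G: "finite G"
      have "flip ((G - H) \<union> (H - G)) (flip H t) = flip G t" by (auto simp: flip_def fun_eq_iff)
      then show "flip G t \<in> S" using h[of "(G - H) \<union> (H - G)"] H G by auto
    qed
  next
    assume "t \<in> B"
    then have h: "\<And>G. finite G \<Longrightarrow> flip G t \<in> S" unfolding B_def Fin_def by auto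
    show "flip H t \<in> B" unfolding B_def Fin_def
    proof clarsimp
      fix G :: "nat set" assume G: "finite G"
      have "flip G (flip H t) = flip ((G - H) \<union> (H - G)) t" by (auto simp: flip_def fun_eq_iff)
      then show "flip G (flip H t) \<in> S" using h[of "(G - H) \<union> (H - G)"] H G by auto
    qed
  qed
  define Ac where "Ac i = sigma_sets (UNIV::(nat\<Rightarrow>bool) set) {(\<lambda>t. t i) -` X \<inter> UNIV | X. X \<in> sets Bm}" for i
  have rv: "(\<lambda>t. t i) \<in> cantor_measure \<rightarrow>\<^sub>M Bm" for i
    unfolding cantor_eq by (rule measurable_component_singleton) simp
  have "prob_space.indep_vars cantor_measure (\<lambda>_. Bm) (\<lambda>i t. t i) UNIV"
  proof (subst P.indep_vars_iff_distr_eq_PiM)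
    have e1: "(\<lambda>x::nat\<Rightarrow>bool. \<lambda>i\<in>UNIV. x i) = (\<lambda>x. x)" by (simp add: fun_eq_iff)
    have e2: "distr cantor_measure Bm (\<lambda>x. x i) = Bm" for i
      unfolding cantor_eq by (rule distr_PiM_component) (auto intro: prob_space_measure_pmf)
    show "distr cantor_measure (Pi\<^sub>M UNIV (\<lambda>_. Bm)) (\<lambda>x. \<lambda>i\<in>UNIV. x i) = Pi\<^sub>M UNIV (\<lambda>i. distr cantor_measure Bm (\<lambda>x. x i))"
      unfolding e1 e2 cantor_eq[symmetric] by simp
  qed (use rv in auto)
  then have indep: "prob_space.indep_sets cantor_measure Ac UNIV"
    unfolding P.indep_vars_def Ac_def by simp
  have tail: "B \<in> prob_space.tail_events cantor_measure Ac"
    unfolding P.tail_events_def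
  proof (intro InterI, clarsimp)
    fix n
    define Mn where "Mn = sigma (UNIV::(nat\<Rightarrow>bool) set) (\<Union>(Ac ` {n..}))"
    have sMn: "sets Mn = sigma_sets UNIV (\<Union>(Ac ` {n..}))" unfolding Mn_def
      by (rule sets_measure_of) auto
    have spMn: "space Mn = UNIV" unfolding Mn_def by (rule space_measure_of) auto
    define h where "h t = (\<lambda>i. if i < n then False else t i)" for t :: "nat \<Rightarrow> bool"
    have hm: "h \<in> Mn \<rightarrow>\<^sub>M cantor_measure" unfolding cantor_eq
    proof (rule measurable_PiM_single)
      show "h \<in> space Mn \<rightarrow> (\<Pi>\<^sub>E i\<in>UNIV. space Bm)" by simp
      fix X i assume X: "i \<in> (UNIV::nat set)" "X \<in> sets Bm"
      show "{\<omega> \<in> space Mn. h \<omega> i \<in> X} \<in> sets Mn"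
      proof (cases "i < n")
        case True
        then have "{\<omega> \<in> space Mn. h \<omega> i \<in> X} = (if False \<in> X then space Mn else {})"
          by (auto simp: h_def)
        then show ?thesis by simp
      next
        case False
        then have eq: "{\<omega> \<in> space Mn. h \<omega> i \<in> X} = (\<lambda>t. t i) -` X \<inter> UNIV"
          by (auto simp: h_def spMn)
        have "(\<lambda>t. t i) -` X \<inter> UNIV \<in> Ac i" unfolding Ac_def
          by (rule sigma_sets.Basic) (use X in auto)
        then have "(\<lambda>t. t i) -` X \<inter> UNIV \<in> \<Union>(Ac ` {n..})" using False by auto
        then show ?thesis unfolding eq sMn by (rule sigma_sets.Basic)
      qed
    qed
    have "h -` B \<inter> space Mn \<in> sets Mn" using measurable_sets[OF hm Bs] .
    moreover have "h -` B \<inter> space Mn = B"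
    proof -
      have "h t = flip {i. i < n \<and> t i} t" for t by (auto simp: h_def flip_def fun_eq_iff)
      moreover have "finite {i. i < n \<and> t i}" for t by simp
      ultimately have "h t \<in> B \<longleftrightarrow> t \<in> B" for t using Binv by metis
      then show ?thesis by (auto simp: spMn)
    qed
    ultimately show "B \<in> sigma_sets UNIV (\<Union>(Ac ` {n..}))" using sMn by simp
  qed
  have "P.prob B = 0 \<or> P.prob B = 1"
  proof (rule P.kolmogorov_0_1_law[OF _ indep tail])
    fix i show "sigma_algebra (space cantor_measure) (Ac i)"
      unfolding Ac_def by (simp add: sigma_algebra_sigma_sets)
  qed
  then show ?thesis using mA by simp
qed


definition psum :: "(nat \<Rightarrow> 'a::real_normed_vector) \<Rightarrow> (nat \<Rightarrow> bool) \<Rightarrow> nat \<Rightarrow> 'a" where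
  "psum x t n = (\<Sum>k\<le>n. (if t k then 1 else 0) *\<^sub>R x k)"

definition Eset :: "(nat \<Rightarrow> 'a::real_normed_vector) \<Rightarrow> nat \<Rightarrow> nat \<Rightarrow> (nat \<Rightarrow> bool) \<Rightarrow> nat \<Rightarrow> bool" where
  "Eset x m N t = (\<lambda>n. inverse (real (Suc m)) < norm (psum x t n - psum x t N))"

lemma A_set_char:
  fixes x :: "nat \<Rightarrow> 'a::banach"
  assumes I: "ideal_on I"
  shows "t \<in> A_set I x \<longleftrightarrow> (\<forall>m. \<exists>N. Eset x m N t \<in> ideal_as_cantor I)"
proof -
  have "t \<in> A_set I x \<longleftrightarrow> (\<exists>L. I_tendsto I (psum x t) L)"
    by (simp add: A_set_def I_convergent_series_def psum_def[abs_def])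
  also have "\<dots> \<longleftrightarrow> (\<forall>m. \<exists>N. {n. inverse (real (Suc m)) < norm (psum x t n - psum x t N)} \<in> I)"
    by (rule I_cauchy[OF I])
  also have "\<dots> \<longleftrightarrow> (\<forall>m. \<exists>N. Eset x m N t \<in> ideal_as_cantor I)"
    by (simp add: Eset_def ideal_as_cantor_def)
  finally show ?thesis .
qed

lemma psum_dep: "(\<forall>k<K. t k = t' k) \<Longrightarrow> n < K \<Longrightarrow> psum x t n = psum x t' n"
  unfolding psum_def by (intro sum.cong refl) auto

lemma Eset_meas: "{t. Eset x m N t i} \<in> sets cantor_measure"
proof (rule finite_dep[of "Suc (max i N)"])
  fix t t' :: "nat \<Rightarrow> bool" assume "\<forall>k<Suc (max i N). t k = t' k"
  then have "psum x t i = psum x t' i" "psum x t N = psum x t' N"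
    by (auto intro: psum_dep)
  then show "Eset x m N t i = Eset x m N t' i" by (simp add: Eset_def)
qed

lemma A_set_meas:
  fixes x :: "nat \<Rightarrow> 'a::banach"
  assumes I: "ideal_on I"
    and an: "analytic_cantor (ideal_as_cantor I) \<or> coanalytic_cantor (ideal_as_cantor I)"
  shows "A_set I x \<in> sets (completion cantor_measure)"
proof -
  have fin_in: "(\<lambda>_. False) \<in> ideal_as_cantor I"
    using ideal_fin[OF I, of "{}"] by (simp add: ideal_as_cantor_def)
  have univ_out: "(\<lambda>_. True) \<notin> ideal_as_cantor I"
    using I by (simp add: ideal_as_cantor_def ideal_on_def)
  have core: "{t. \<exists>\<sigma>. g \<sigma> = Eset x m N t} \<in> sets (completion cantor_measure)"
    if "continuous_map baire_space cantor_space g" for g m N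
    by (rule analytic_core[OF cont_local[OF that] Eset_meas])
  from an show ?thesis
  proof
    assume "analytic_cantor (ideal_as_cantor I)"
    then obtain g where g: "continuous_map baire_space cantor_space g" "g ` UNIV = ideal_as_cantor I"
      using fin_in unfolding analytic_cantor_def by auto
    have mem: "E \<in> ideal_as_cantor I \<longleftrightarrow> (\<exists>\<sigma>. g \<sigma> = E)" for E
      unfolding g(2)[symmetric] by auto
    have "A_set I x = (\<Inter>m. \<Union>N. {t. \<exists>\<sigma>. g \<sigma> = Eset x m N t})"
      by (auto simp: A_set_char[OF I] mem)
    also have "\<dots> \<in> sets (completion cantor_measure)"
      using core[OF g(1)] by (intro sets.countable_INT sets.countable_UN) auto
    finally show ?thesis .
  next
    assume "coanalytic_cantor (ideal_as_cantor I)"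
    then obtain g where g: "continuous_map baire_space cantor_space g" "g ` UNIV = UNIV - ideal_as_cantor I"
      using univ_out unfolding coanalytic_cantor_def analytic_cantor_def by auto
    have mem: "E \<in> ideal_as_cantor I \<longleftrightarrow> \<not> (\<exists>\<sigma>. g \<sigma> = E)" for E
    proof -
      have "E \<in> g ` UNIV \<longleftrightarrow> E \<notin> ideal_as_cantor I" using g(2) by auto
      then show ?thesis by auto
    qed
    have "UNIV - A_set I x = (\<Union>m. \<Inter>N. {t. \<exists>\<sigma>. g \<sigma> = Eset x m N t})"
      by (auto simp: A_set_char[OF I] mem) blast
    also have "\<dots> \<in> sets (completion cantor_measure)"
      using core[OF g(1)] by (intro sets.countable_INT sets.countable_UN) auto
    finally have "UNIV - (UNIV - A_set I x) \<in> sets (completion cantor_measure)"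
      by (metis sets.compl_sets space_completion space_cantor)
    then show ?thesis by (simp add: Diff_Diff_Int)
  qed
qed

theorem theorem4p1:
  fixes \<I> :: "nat set set" and x :: "nat \<Rightarrow> 'a::banach"
  assumes "ideal_on \<I>"
    and "analytic_cantor (ideal_as_cantor \<I>) \<or> coanalytic_cantor (ideal_as_cantor \<I>)"
  shows "A_set \<I> x \<in> sets (completion cantor_measure)
    \<and> (measure (completion cantor_measure) (A_set \<I> x) = 0
       \<or> measure (completion cantor_measure) (A_set \<I> x) = 1)
    \<and> (\<not> I_convergent_series \<I> x \<longrightarrow> measure (completion cantor_measure) (A_set \<I> x) = 0)"
proof -
  interpret P: prob_space cantor_measure by (rule prob_cantor)
  note I = assms(1)
  define A where "A = A_set \<I> x"
  have Am: "A \<in> sets (completion cantor_measure)" unfolding A_def by (rule A_set_meas[OF assms])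
  have inv: "\<And>G t. finite G \<Longrightarrow> flip G t \<in> A \<longleftrightarrow> t \<in> A" unfolding A_def by (rule A_flip[OF I])
  have zo: "measure (completion cantor_measure) A = 0 \<or> measure (completion cantor_measure) A = 1"
    by (rule zero_one[OF Am inv])
  have div: "measure (completion cantor_measure) A = 0" if nc: "\<not> I_convergent_series \<I> x"
  proof (rule ccontr)
    assume "measure (completion cantor_measure) A \<noteq> 0"
    with zo have m1: "measure (completion cantor_measure) A = 1" by simp
    obtain S N N' where SN: "A = S \<union> N" "N \<subseteq> N'" "N' \<in> null_sets cantor_measure" "S \<in> sets cantor_measure"
      using sets_completionE[OF Am] by metis
    have mS: "measure cantor_measure S = 1" using compl_measure[OF SN] m1 by simp
    define S' where "S' = flip UNIV -` S"
    have S': "S' \<in> sets cantor_measure" unfolding S'_def using SN(4) by (rule flip_sets)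
    have mS': "measure cantor_measure S' = 1" unfolding S'_def using flip_measure[OF SN(4)] mS by simp
    have c1: "measure cantor_measure (UNIV - S) = 0" using P.prob_compl[OF SN(4)] mS by simp
    have c2: "measure cantor_measure (UNIV - S') = 0" using P.prob_compl[OF S'] mS' by simp
    have "measure cantor_measure ((UNIV - S) \<union> (UNIV - S')) \<le> measure cantor_measure (UNIV - S) + measure cantor_measure (UNIV - S')"
    proof (rule measure_Un_le)
      show "UNIV - S \<in> sets cantor_measure" using sets.compl_sets[OF SN(4)] by simp
      show "UNIV - S' \<in> sets cantor_measure" using sets.compl_sets[OF S'] by simp
    qed
    then have "measure cantor_measure ((UNIV - S) \<union> (UNIV - S')) = 0"
      using c1 c2 measure_nonneg[of cantor_measure "(UNIV - S) \<union> (UNIV - S')"] by linarith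
    moreover have "S \<inter> S' = {} \<Longrightarrow> (UNIV - S) \<union> (UNIV - S') = UNIV" by auto
    moreover have "measure cantor_measure UNIV = 1" using P.prob_space by simp
    ultimately obtain t where t: "t \<in> S" "t \<in> S'" by fastforce
    have "t \<in> A_set \<I> x" "flip UNIV t \<in> A_set \<I> x" using t SN(1) unfolding A_def[symmetric] S'_def by auto
    then have "I_convergent_series \<I> x" by (rule A_compl[OF I])
    with nc show False by simp
  qed
  show ?thesis using Am zo div unfolding A_def by blast
qed

end
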